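(* Let $G$ be a non-bipartite $\ell$-regular graph. Assume the edge-connectivity of $G$ is $\ell$, and that the only edge cuts consisting of $\ell$ edges are the sets of $\ell$ edges incident to a single vertex. Then for any vertex cut $S$ of $G$, $|S| > c(G\setminus S)$. In particular, $t(K(n,k))>1$ for any $n\ge 2k+1$.
   Context: A vertex cut of a connected graph $G$ is a set $S$ of vertices whose removal disconnects $G$; $c(G\setminus S)$ denotes the number of connected components after deleting $S$. The toughness is $t(G)=\min_S |S|/c(G\setminus S)$ over all vertex cuts $S$. The Kneser graph $K(n,k)$ has as vertices the $k$-element subsets of $[n]$, two vertices being adjacent iff they are disjoint. *)

theory Defs
  imports Main "HOL-Library.Extended_Real"
begin

definition sgraph :: "'a set \<Rightarrow> 'a set set \<Rightarrow> bool" where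
  "sgraph V E \<longleftrightarrow> finite V \<and> (\<forall>e\<in>E. card e = 2 \<and> e \<subseteq> V)"

definition incident_edges :: "'a set set \<Rightarrow> 'a \<Rightarrow> 'a set set" where
  "incident_edges E v = {e\<in>E. v \<in> e}"

definition regular :: "'a set \<Rightarrow> 'a set set \<Rightarrow> nat \<Rightarrow> bool" where
  "regular V E l \<longleftrightarrow> (\<forall>v\<in>V. card (incident_edges E v) = l)"

definition bipartite :: "'a set \<Rightarrow> 'a set set \<Rightarrow> bool" where
  "bipartite V E \<longleftrightarrow> (\<exists>A B. A \<union> B = V \<and> A \<inter> B = {} \<and>
      (\<forall>e\<in>E. e \<inter> A \<noteq> {} \<and> e \<inter> B \<noteq> {}))"

definition conn_rel :: "'a set \<Rightarrow> 'a set set \<Rightarrow> ('a \<times> 'a) set" where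
  "conn_rel W E = {(u,v). u \<in> W \<and> v \<in> W \<and>
      (u,v) \<in> ({(x,y). {x,y} \<in> E \<and> x \<in> W \<and> y \<in> W})\<^sup>*}"

definition num_components :: "'a set \<Rightarrow> 'a set set \<Rightarrow> nat" where
  "num_components W E = card (W // conn_rel W E)"

definition vertex_cut :: "'a set \<Rightarrow> 'a set set \<Rightarrow> 'a set \<Rightarrow> bool" where
  "vertex_cut V E S \<longleftrightarrow> S \<subseteq> V \<and> num_components (V - S) E \<ge> 2"

definition edge_cut :: "'a set \<Rightarrow> 'a set set \<Rightarrow> 'a set set \<Rightarrow> bool" where
  "edge_cut V E F \<longleftrightarrow> F \<subseteq> E \<and> num_components V (E - F) \<ge> 2"

definition edge_connectivity :: "'a set \<Rightarrow> 'a set set \<Rightarrow> nat" where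
  "edge_connectivity V E = (INF F\<in>{F. edge_cut V E F}. card F)"

text \<open>Toughness (value \<infinity> if there is no vertex cut, e.g. complete graphs).\<close>
definition toughness :: "'a set \<Rightarrow> 'a set set \<Rightarrow> ereal" where
  "toughness V E = (INF S\<in>{S. vertex_cut V E S}.
      ereal (real (card S) / real (num_components (V - S) E)))"

definition kneser_verts :: "nat \<Rightarrow> nat \<Rightarrow> nat set set" where
  "kneser_verts n k = {A. A \<subseteq> {1..n} \<and> card A = k}"

definition kneser_edges :: "nat \<Rightarrow> nat \<Rightarrow> nat set set set" where
  "kneser_edges n k = {{A,B} | A B. A \<in> kneser_verts n k \<and> B \<in> kneser_verts n k
      \<and> A \<noteq> B \<and> A \<inter> B = {}}"

end

theory Submission
  imports Defs
begin

definition bd :: "'a set set \<Rightarrow> 'a set \<Rightarrow> 'a set set" where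
  "bd E X = {e\<in>E. e \<inter> X \<noteq> {} \<and> \<not> e \<subseteq> X}"

lemma sgraph_edge:
  assumes "sgraph V E" "e \<in> E"
  obtains x y where "e = {x,y}" "x \<noteq> y" "x \<in> V" "y \<in> V"
proof -
  from assms have "card e = 2" "e \<subseteq> V" unfolding sgraph_def by auto
  then obtain x y where "e = {x,y}" "x \<noteq> y" by (auto simp: card_2_iff)
  with \<open>e \<subseteq> V\<close> show ?thesis using that by auto
qed

lemma sgraph_finite_E: "sgraph V E \<Longrightarrow> finite E"
  unfolding sgraph_def by (meson PowI finite_Pow_iff finite_subset subsetI)

lemma bd_pair: "x \<noteq> y \<Longrightarrow> {x,y} \<in> bd E X \<longleftrightarrow> {x,y} \<in> E \<and> (x \<in> X) \<noteq> (y \<in> X)"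
  unfolding bd_def by auto

lemma bd_sub: "bd E X \<subseteq> E" unfolding bd_def by auto

lemma bd_compl: assumes "sgraph V E" shows "bd E (V - X) = bd E X"
proof -
  have "e \<subseteq> V" if "e \<in> E" for e using assms that unfolding sgraph_def by auto
  then show ?thesis unfolding bd_def by blast
qed

lemma bd_single: assumes "sgraph V E" shows "bd E {v} = incident_edges E v"
proof -
  have "\<not> e \<subseteq> {v}" if "e \<in> E" for e
  proof
    assume "e \<subseteq> {v}"
    then have "card e \<le> 1" using card_mono[of "{v}" e] by auto
    with assms that show False unfolding sgraph_def by auto
  qed
  then show ?thesis unfolding bd_def incident_edges_def by auto
qed

lemma finite_inc: assumes "sgraph V E" shows "finite (incident_edges E v)"
  using sgraph_finite_E[OF assms] unfolding incident_edges_def by auto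

lemma two_stars:
  assumes g: "sgraph V E" and r: "regular V E d" and pq: "p \<in> V" "q \<in> V" "p \<noteq> q"
  shows "card ((incident_edges E p \<union> incident_edges E q) - {{p,q}}) \<ge> 2*d - 2"
proof -
  let ?P = "incident_edges E p" and ?Q = "incident_edges E q"
  have fP: "finite ?P" "finite ?Q" using finite_inc[OF g] by auto
  have "?P \<inter> ?Q \<subseteq> {{p,q}}"
  proof
    fix e assume "e \<in> ?P \<inter> ?Q"
    then have "e \<in> E" "p \<in> e" "q \<in> e" unfolding incident_edges_def by auto
    then obtain x y where "e = {x,y}" "x \<noteq> y" using sgraph_edge[OF g] by metis
    with \<open>p \<in> e\<close> \<open>q \<in> e\<close> pq show "e \<in> {{p,q}}" by auto
  qed
  then have "card (?P \<inter> ?Q) \<le> 1"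
    by (metis card.empty card_mono finite.emptyI finite.insertI is_singleton_altdef is_singleton_def)
  moreover have "card ?P + card ?Q = card (?P \<union> ?Q) + card (?P \<inter> ?Q)"
    using card_Un_Int[OF fP] .
  moreover have "card ?P = d" "card ?Q = d" using r pq unfolding regular_def by auto
  moreover have "card ((?P \<union> ?Q) - {{p,q}}) \<ge> card (?P \<union> ?Q) - 1"
    by (simp add: card_Diff_singleton_if)
  ultimately show ?thesis by linarith
qed

lemma card_filter_sum: "finite A \<Longrightarrow> card {x\<in>A. P x} = (\<Sum>x\<in>A. if P x then 1 else 0::nat)"
  by (simp add: sum.If_cases Int_def)

lemma bd_submod:
  assumes g: "sgraph V E"
  shows "card (bd E (X \<inter> Y)) + card (bd E (X \<union> Y)) \<le> card (bd E X) + card (bd E Y)"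
proof -
  have fE: "finite E" using sgraph_finite_E[OF g] .
  have c: "card (bd E Z) = (\<Sum>e\<in>E. if e \<in> bd E Z then 1 else 0::nat)" for Z
    unfolding bd_def using card_filter_sum[OF fE] by (simp add: bd_def)
  have pt: "(if e \<in> bd E (X \<inter> Y) then 1 else 0) + (if e \<in> bd E (X \<union> Y) then 1 else 0)
      \<le> (if e \<in> bd E X then 1 else 0) + (if e \<in> bd E Y then (1::nat) else 0)" if eE: "e \<in> E" for e
  proof -
    obtain x y where e: "e = {x,y}" "x \<noteq> y" using sgraph_edge[OF g eE] by metis
    show ?thesis using eE unfolding e bd_pair[OF e(2)] by auto
  qed
  show ?thesis unfolding c sum.distrib[symmetric] by (rule sum_mono) (use pt in auto)
qed

lemma bd_posimod:
  assumes g: "sgraph V E" and XY: "X \<subseteq> V" "Y \<subseteq> V"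
  shows "card (bd E (X - Y)) + card (bd E (Y - X)) \<le> card (bd E X) + card (bd E Y)"
proof -
  have 1: "X - Y = X \<inter> (V - Y)" using XY by auto
  have 2: "Y - X = V - (X \<union> (V - Y))" using XY by auto
  show ?thesis using bd_submod[OF g, of X "V - Y"] unfolding 1 2 bd_compl[OF g] .
qed

lemma conn_rel_equiv: "equiv W (conn_rel W E)"
proof (rule equivI)
  let ?A = "{(x,y). {x,y} \<in> E \<and> x \<in> W \<and> y \<in> W}"
  show "conn_rel W E \<subseteq> W \<times> W" unfolding conn_rel_def by auto
  show "refl_on W (conn_rel W E)" unfolding conn_rel_def refl_on_def by auto
  have sA: "?A\<inverse> = ?A" by (auto simp: insert_commute)
  show "sym (conn_rel W E)"
  proof (rule symI)
    fix a b assume "(a,b) \<in> conn_rel W E"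
    then have ab: "a \<in> W" "b \<in> W" "(a,b) \<in> ?A\<^sup>*" unfolding conn_rel_def by auto
    then have "(b,a) \<in> (?A\<inverse>)\<^sup>*" by (simp add: rtrancl_converse)
    then have "(b,a) \<in> ?A\<^sup>*" using sA by simp
    then show "(b,a) \<in> conn_rel W E" using ab unfolding conn_rel_def by simp
  qed
  show "trans (conn_rel W E)" unfolding conn_rel_def trans_def by auto
qed

lemma conn_rel_edge:
  assumes "C \<in> W // conn_rel W E" "u \<in> C" "v \<in> W" "{u,v} \<in> E"
  shows "v \<in> C"
proof -
  let ?R = "conn_rel W E"
  obtain x where x: "C = ?R``{x}" "x \<in> W" using assms(1) by (rule quotientE)
  have "(x,u) \<in> ?R" using x assms(2) by auto
  then have "u \<in> W" unfolding conn_rel_def by auto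
  have "(u,v) \<in> ?R" unfolding conn_rel_def using \<open>u \<in> W\<close> assms(3,4) by auto
  with \<open>(x,u) \<in> ?R\<close> have "(x,v) \<in> ?R"
    using conn_rel_equiv[of W E] unfolding equiv_def trans_def by blast
  then show ?thesis using x by auto
qed

lemma crossing:
  assumes "(a,b) \<in> R\<^sup>*" "a \<in> X" "b \<notin> X"
  shows "\<exists>x y. (x,y) \<in> R \<and> x \<in> X \<and> y \<notin> X"
  using assms
proof (induction rule: rtrancl_induct)
  case base then show ?case by simp
next
  case (step y z)
  then show ?case by blast
qed

lemma card_ge2: assumes "finite A" "x \<in> A" "y \<in> A" "x \<noteq> y" shows "card A \<ge> 2"
proof -
  have "card {x,y} \<le> card A" using assms by (intro card_mono) auto
  then show ?thesis using assms by simp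
qed

lemma edge_cut_bd:
  assumes g: "sgraph V E" and X: "X \<subseteq> V" "X \<noteq> {}" "X \<noteq> V"
  shows "edge_cut V E (bd E X)"
proof -
  let ?E' = "E - bd E X"
  let ?A = "{(x,y). {x,y} \<in> ?E' \<and> x \<in> V \<and> y \<in> V}"
  let ?R = "conn_rel V ?E'"
  have cl: "y \<in> X" if "(x,y) \<in> ?A\<^sup>*" "x \<in> X" for x y
  proof (rule ccontr)
    assume "y \<notin> X"
    from crossing[OF that this] obtain u v where uv: "(u,v) \<in> ?A" "u \<in> X" "v \<notin> X" by blast
    then have "u \<noteq> v" by auto
    with uv show False using bd_pair[of u v E X] by auto
  qed
  obtain x where x: "x \<in> X" using X by auto
  obtain y where y: "y \<in> V" "y \<notin> X" using X by auto
  have fin: "finite V" using g unfolding sgraph_def by auto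
  have eq: "equiv V ?R" by (rule conn_rel_equiv)
  have "?R``{x} \<in> V // ?R" "?R``{y} \<in> V // ?R" using x y X by (auto intro: quotientI)
  moreover have "y \<in> ?R``{y}" using eq y unfolding equiv_def refl_on_def by auto
  moreover have "y \<notin> ?R``{x}" using cl x y unfolding conn_rel_def by auto
  moreover have "finite (V // ?R)" using finite_quotient[OF fin] eq unfolding equiv_def by auto
  ultimately have "card (V // ?R) \<ge> 2" using card_ge2 by metis
  then show ?thesis unfolding edge_cut_def num_components_def using bd_sub by auto
qed

lemma complete_comp:
  assumes "\<forall>x\<in>W. \<forall>y\<in>W. x \<noteq> y \<longrightarrow> {x,y} \<in> E"
  shows "num_components W E \<le> 1"
proof -
  let ?R = "conn_rel W E"
  have "W // ?R \<subseteq> {W}"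
  proof
    fix C assume "C \<in> W // ?R"
    then obtain x where x: "C = ?R``{x}" "x \<in> W" by (rule quotientE)
    have "(x,y) \<in> ?R" if "y \<in> W" for y
    proof (cases "x = y")
      case True then show ?thesis using x that unfolding conn_rel_def by auto
    next
      case False then show ?thesis using x that assms unfolding conn_rel_def by auto
    qed
    then have "C = W" using x unfolding conn_rel_def by auto
    then show "C \<in> {W}" by simp
  qed
  then have "card (W // ?R) \<le> card {W}" by (intro card_mono) auto
  then show ?thesis unfolding num_components_def by simp
qed

lemma tough_lemma:
  assumes g: "sgraph V E" and r: "regular V E d" and d1: "d \<ge> 1" and nb: "\<not> bipartite V E"
    and P1: "\<forall>X. X \<subseteq> V \<and> X \<noteq> {} \<and> X \<noteq> V \<longrightarrow> card (bd E X) \<ge> d"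
    and P2: "\<forall>X. X \<subseteq> V \<and> card X \<ge> 2 \<and> card (V - X) \<ge> 2 \<longrightarrow> card (bd E X) > d"
    and vc: "vertex_cut V E S"
  shows "card S > num_components (V - S) E"
proof -
  define W where "W = V - S"
  define R where "R = conn_rel W E"
  define Q where "Q = W // R"
  define c where "c = card Q"
  define ES where "ES = {e\<in>E. e \<inter> S \<noteq> {}}"
  have SV: "S \<subseteq> V" and c2: "c \<ge> 2" using vc unfolding vertex_cut_def c_def Q_def R_def W_def num_components_def by auto
  have finV: "finite V" using g unfolding sgraph_def by auto
  have finW: "finite W" using finV unfolding W_def by auto
  have finS: "finite S" using finV SV finite_subset by auto
  have eq: "equiv W R" unfolding R_def by (rule conn_rel_equiv)
  have finQ: "finite Q" unfolding Q_def using finite_quotient[OF finW] eq unfolding equiv_def by auto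
  have finE: "finite E" using sgraph_finite_E[OF g] .
  have cls: "C \<subseteq> W" "C \<noteq> {}" if "C \<in> Q" for C
    using that eq Union_quotient[OF eq] in_quotient_imp_non_empty[OF eq] unfolding Q_def by auto
  have finC: "finite C" if "C \<in> Q" for C using cls[OF that] finW finite_subset by auto
  have bdS: "\<exists>x y. e = {x,y} \<and> x \<in> C \<and> y \<in> S" if C: "C \<in> Q" and e: "e \<in> bd E C" for C e
  proof -
    have eE: "e \<in> E" using e bd_sub by auto
    obtain x y where xy: "e = {x,y}" "x \<noteq> y" "x \<in> V" "y \<in> V" using sgraph_edge[OF g eE] by metis
    have cross: "(x \<in> C) \<noteq> (y \<in> C)" using e xy bd_pair[of x y E C] by auto
    have in_S: "b \<in> S" if "a \<in> C" "b \<notin> C" "b \<in> V" "{a,b} \<in> E" for a b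
    proof (rule ccontr)
      assume "b \<notin> S"
      then have "b \<in> W" using that unfolding W_def by auto
      then have "b \<in> C" using conn_rel_edge[of C W E a b] C that unfolding Q_def R_def by auto
      then show False using that by auto
    qed
    show ?thesis
    proof (cases "x \<in> C")
      case True
      then show ?thesis using in_S[of x y] cross xy eE by auto
    next
      case False
      then have "y \<in> C" using cross by auto
      then have "y \<in> S \<or> x \<in> S" using in_S[of y x] False xy eE by (auto simp: insert_commute)
      then show ?thesis using \<open>y \<in> C\<close> xy cls[OF C] unfolding W_def by (auto simp: insert_commute)
    qed
  qed
  have sub: "bd E C \<subseteq> ES" if CQ: "C \<in> Q" for C
  proof
    fix e assume e: "e \<in> bd E C"
    then obtain x y where "e = {x,y}" "x \<in> C" "y \<in> S" using bdS[OF CQ] by blast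
    then show "e \<in> ES" using e bd_sub unfolding ES_def by auto
  qed
  have disj: "bd E C \<inter> bd E C' = {}" if CC: "C \<in> Q" "C' \<in> Q" "C \<noteq> C'" for C C'
  proof (rule ccontr)
    assume "bd E C \<inter> bd E C' \<noteq> {}"
    then obtain e where "e \<in> bd E C" "e \<in> bd E C'" by auto
    then obtain x y x' y' where e: "e = {x,y}" "x \<in> C" "y \<in> S" "e = {x',y'}" "x' \<in> C'" "y' \<in> S"
      using bdS CC by metis
    have "x' \<in> W" using cls[OF CC(2)] e by auto
    then have "x' \<noteq> y" using e unfolding W_def by auto
    then have "x' = x" using e by auto
    then have "C \<inter> C' \<noteq> {}" using e by auto
    then show False using quotient_disj[OF eq] CC unfolding Q_def by blast
  qed
  have other: "\<exists>C'\<in>Q. C' \<noteq> C" for C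
  proof -
    have "card (Q - {C}) \<ge> 1" using c2 unfolding c_def by (cases "C \<in> Q") (auto simp: card_Diff_singleton_if)
    then have "Q - {C} \<noteq> {}" by (metis card.empty not_one_le_zero)
    then obtain C' where "C' \<in> Q - {C}" by blast
    then show ?thesis by auto
  qed
  have P1C: "card (bd E C) \<ge> d" if C: "C \<in> Q" for C
  proof -
    obtain C' where C': "C' \<in> Q" "C' \<noteq> C" using other by blast
    obtain x' where "x' \<in> C'" using cls[OF C'(1)] by auto
    then have "x' \<notin> C" using quotient_disj[OF eq] C C' unfolding Q_def by blast
    moreover have "x' \<in> V" using \<open>x' \<in> C'\<close> cls[OF C'(1)] unfolding W_def by auto
    ultimately have "C \<noteq> V" by auto
    moreover have "C \<subseteq> V" using cls[OF C] unfolding W_def by auto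
    ultimately show ?thesis using P1 cls[OF C] by auto
  qed
  have sum_eq: "(\<Sum>C\<in>Q. card (bd E C)) = card (\<Union>C\<in>Q. bd E C)"
    by (rule card_UN_disjoint[symmetric]) (use finQ finE bd_sub disj in \<open>auto intro: finite_subset\<close>)
  have ES_eq: "ES = (\<Union>s\<in>S. incident_edges E s)" unfolding ES_def incident_edges_def by auto
  have upper: "card ES \<le> d * card S"
  proof -
    have "card ES \<le> (\<Sum>s\<in>S. card (incident_edges E s))" unfolding ES_eq by (rule card_UN_le[OF finS])
    also have "\<dots> = (\<Sum>s\<in>S. d)" using r SV unfolding regular_def by (intro sum.cong) auto
    finally show ?thesis by (simp add: mult.commute)
  qed
  have lower: "d * c \<le> (\<Sum>C\<in>Q. card (bd E C))"
  proof -
    have "(\<Sum>C\<in>Q. d) \<le> (\<Sum>C\<in>Q. card (bd E C))" using P1C by (intro sum_mono) auto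
    then show ?thesis unfolding c_def by (simp add: mult.commute)
  qed
  have Un_sub: "(\<Union>C\<in>Q. bd E C) \<subseteq> ES" using sub by auto
  have finES: "finite ES" using finE unfolding ES_def by auto
  have Sne: "S \<noteq> {}"
  proof -
    have "Q \<noteq> {}" using c2 unfolding c_def by (cases "Q = {}") auto
    then obtain C where C: "C \<in> Q" by blast
    have "card (bd E C) \<ge> 1" using P1C[OF C] d1 by linarith
    then have "bd E C \<noteq> {}" by (cases "bd E C = {}") auto
    then have "ES \<noteq> {}" using sub[OF C] by auto
    then show ?thesis unfolding ES_def by auto
  qed
  have main: "card S > c"
  proof (cases "\<exists>C0\<in>Q. card C0 \<ge> 2")
    case True
    then obtain C0 where C0: "C0 \<in> Q" "card C0 \<ge> 2" by blast
    obtain C' where C': "C' \<in> Q" "C' \<noteq> C0" using other by blast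
    obtain x' where "x' \<in> C'" using cls[OF C'(1)] by auto
    then have x'1: "x' \<notin> C0" using quotient_disj[OF eq] C0 C' unfolding Q_def by blast
    have x'2: "x' \<in> W" using \<open>x' \<in> C'\<close> cls[OF C'(1)] by auto
    obtain s where s: "s \<in> S" using Sne by auto
    have "s \<notin> C0" using cls[OF C0(1)] s unfolding W_def by auto
    moreover have "s \<noteq> x'" using s x'2 unfolding W_def by auto
    ultimately have "card (V - C0) \<ge> 2" using card_ge2[of "V - C0" s x'] finV s SV x'1 x'2
      unfolding W_def by auto
    moreover have "C0 \<subseteq> V" using cls[OF C0(1)] unfolding W_def by auto
    ultimately have big: "card (bd E C0) \<ge> d + 1" using P2 C0 by auto
    have "(\<Sum>C\<in>Q. card (bd E C)) = card (bd E C0) + (\<Sum>C\<in>Q - {C0}. card (bd E C))"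
      by (rule sum.remove[OF finQ C0(1)])
    also have "(\<Sum>C\<in>Q - {C0}. card (bd E C)) \<ge> (\<Sum>C\<in>Q - {C0}. d)" using P1C by (intro sum_mono) auto
    moreover have "(\<Sum>C\<in>Q - {C0}. d) = d * (c - 1)" using C0 finQ unfolding c_def by (simp add: mult.commute)
    ultimately have "(\<Sum>C\<in>Q. card (bd E C)) \<ge> d + 1 + d * (c - 1)" using big by linarith
    moreover have "d + d * (c - 1) = d * c" using c2 by (cases c) auto
    ultimately have "d * c + 1 \<le> card ES"
      using sum_eq card_mono[OF finES Un_sub] by linarith
    then have "d * c < d * card S" using upper by linarith
    then show ?thesis by simp
  next
    case False
    note nobig = this
    show ?thesis
    proof (cases "\<exists>e0\<in>E. e0 \<subseteq> S")
      case True
      then obtain e0 where e0: "e0 \<in> E" "e0 \<subseteq> S" by blast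
      obtain x y where xy: "e0 = {x,y}" using sgraph_edge[OF g e0(1)] by metis
      have e0ES: "e0 \<in> ES" using e0 xy unfolding ES_def by auto
      have "(\<Union>C\<in>Q. bd E C) \<subseteq> ES - {e0}"
      proof
        fix e assume "e \<in> (\<Union>C\<in>Q. bd E C)"
        then obtain C where C: "C \<in> Q" "e \<in> bd E C" by auto
        then obtain a b where ab: "e = {a,b}" "a \<in> C" by (metis bdS)
        have "a \<notin> S" using cls[OF C(1)] ab unfolding W_def by auto
        then have "e \<noteq> e0" using ab e0 by auto
        then show "e \<in> ES - {e0}" using sub C by auto
      qed
      then have "card (\<Union>C\<in>Q. bd E C) \<le> card ES - 1"
        using card_mono[of "ES - {e0}"] finES e0ES by (simp add: card_Diff_singleton)
      then have "d * c \<le> d * card S - 1" using lower sum_eq upper by linarith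
      moreover have "d * c \<ge> 2" using d1 c2 proof -
        have "1 * 2 \<le> d * c" using d1 c2 by (intro mult_le_mono) auto
        then show ?thesis by simp
      qed
      ultimately have "d * c < d * card S" by linarith
      then show ?thesis by simp
    next
      case False
      note noS = this
      have "bipartite V E" unfolding bipartite_def
      proof (intro exI conjI ballI)
        show "S \<union> W = V" using SV unfolding W_def by auto
        show "S \<inter> W = {}" unfolding W_def by auto
        fix e assume eE: "e \<in> E"
        obtain x y where xy: "e = {x,y}" "x \<noteq> y" "x \<in> V" "y \<in> V" using sgraph_edge[OF g eE] by metis
        have "\<not> (x \<in> W \<and> y \<in> W)"
        proof
          assume xyW: "x \<in> W \<and> y \<in> W"
          let ?C = "R``{x}"
          have CQ: "?C \<in> Q" unfolding Q_def using xyW by (auto intro: quotientI)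
          have "x \<in> ?C" using eq xyW unfolding equiv_def refl_on_def by auto
          moreover have "y \<in> ?C" using conn_rel_edge[of ?C W E x y] CQ \<open>x \<in> ?C\<close> xyW eE xy
            unfolding Q_def R_def by auto
          ultimately have "card ?C \<ge> 2" using card_ge2 finC[OF CQ] xy by metis
          then show False using nobig CQ by auto
        qed
        moreover have "\<not> (x \<in> S \<and> y \<in> S)" using noS eE xy by auto
        ultimately show "e \<inter> S \<noteq> {}" "e \<inter> W \<noteq> {}" using xy unfolding W_def by auto
      qed
      then show ?thesis using nb by simp
    qed
  qed
  then show ?thesis unfolding c_def Q_def R_def W_def num_components_def .
qed

lemma part1:
  fixes V :: "'a set" and E :: "'a set set" and l :: nat
  assumes g: "sgraph V E"
    and r: "regular V E l"
    and nb: "\<not> bipartite V E"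
    and ec: "edge_connectivity V E = l"
    and st: "\<forall>F. edge_cut V E F \<and> card F = l \<longrightarrow> (\<exists>v\<in>V. F = incident_edges E v)"
  shows "\<forall>S. vertex_cut V E S \<longrightarrow> card S > num_components (V - S) E"
proof -
  have l1: "l \<ge> 1"
  proof (rule ccontr)
    assume "\<not> l \<ge> 1"
    then have l0: "l = 0" by simp
    have "E = {}"
    proof (rule ccontr)
      assume "E \<noteq> {}"
      then obtain e where eE: "e \<in> E" by auto
      obtain x y where xy: "e = {x,y}" "x \<in> V" using sgraph_edge[OF g eE] by metis
      have "e \<in> incident_edges E x" using eE xy unfolding incident_edges_def by auto
      moreover have "card (incident_edges E x) = 0" using r xy l0 unfolding regular_def by auto
      ultimately show False using finite_inc[OF g, of x] by auto
    qed
    then have "bipartite V E" unfolding bipartite_def by auto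
    then show False using nb by simp
  qed
  have P1: "\<forall>X. X \<subseteq> V \<and> X \<noteq> {} \<and> X \<noteq> V \<longrightarrow> card (bd E X) \<ge> l"
  proof (intro allI impI)
    fix X assume X: "X \<subseteq> V \<and> X \<noteq> {} \<and> X \<noteq> V"
    then have "edge_cut V E (bd E X)" using edge_cut_bd[OF g] by auto
    then have "card (bd E X) \<in> card ` {F. edge_cut V E F}" by auto
    then have "Inf (card ` {F. edge_cut V E F}) \<le> card (bd E X)"
      unfolding Inf_nat_def by (rule Least_le)
    then show "card (bd E X) \<ge> l" using ec unfolding edge_connectivity_def by simp
  qed
  have P2: "\<forall>X. X \<subseteq> V \<and> card X \<ge> 2 \<and> card (V - X) \<ge> 2 \<longrightarrow> card (bd E X) > l"
  proof (intro allI impI)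
    fix X0 assume X0: "X0 \<subseteq> V \<and> card X0 \<ge> 2 \<and> card (V - X0) \<ge> 2"
    show "card (bd E X0) > l"
    proof (rule ccontr)
      assume "\<not> card (bd E X0) > l"
      moreover have "X0 \<noteq> {}" "X0 \<noteq> V" using X0 by auto
      moreover have "card (bd E X0) \<ge> l" using P1 X0 \<open>X0 \<noteq> {}\<close> \<open>X0 \<noteq> V\<close> by blast
      ultimately have "card (bd E X0) = l" by linarith
      moreover have "edge_cut V E (bd E X0)" using edge_cut_bd[OF g] X0 \<open>X0 \<noteq> {}\<close> \<open>X0 \<noteq> V\<close> by auto
      ultimately obtain v where v: "v \<in> V" "bd E X0 = incident_edges E v" using st by blast
      obtain X where X: "X \<subseteq> V" "card X \<ge> 2" "v \<in> X" "bd E X = incident_edges E v"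
      proof (cases "v \<in> X0")
        case True show ?thesis by (rule that) (use X0 v True in auto)
      next
        case False
        have "V - X0 \<subseteq> V" "card (V - X0) \<ge> 2" "v \<in> V - X0" "bd E (V - X0) = incident_edges E v"
          using X0 v False bd_compl[OF g, of X0] by auto
        then show ?thesis by (rule that)
      qed
      let ?Y = "X - {v}"
      have Yne: "?Y \<noteq> {}"
      proof
        assume "?Y = {}"
        then have "X \<subseteq> {v}" by auto
        then have "card X \<le> 1" using card_mono[of "{v}" X] by auto
        with X show False by auto
      qed
      have YV: "?Y \<noteq> V" "?Y \<subseteq> V" using X by auto
      have "bd E ?Y = {}"
      proof (rule ccontr)
        assume "bd E ?Y \<noteq> {}"
        then obtain e where e: "e \<in> bd E ?Y" by auto
        then have eE: "e \<in> E" using bd_sub by auto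
        obtain a b where ab: "e = {a,b}" "a \<noteq> b" using sgraph_edge[OF g eE] by metis
        have cr: "(a \<in> ?Y) \<noteq> (b \<in> ?Y)" using e ab bd_pair[of a b E ?Y] by auto
        have gen: False if "y \<in> ?Y" "z \<notin> ?Y" "e = {y,z}" "y \<noteq> z" for y z
        proof (cases "z \<in> X")
          case True
          then have "z = v" using that by auto
          then have "e \<in> incident_edges E v" using eE that unfolding incident_edges_def by auto
          then have "e \<in> bd E X" using X by auto
          moreover have "e \<subseteq> X" using that True by auto
          ultimately show False unfolding bd_def by auto
        next
          case False
          then have "e \<in> bd E X" using that eE bd_pair[of y z E X] by auto
          then have "v \<in> e" using X unfolding incident_edges_def by auto
          then show False using that False X by auto
        qed
        show False
        proof (cases "a \<in> ?Y")
          case True then show False using gen[of a b] cr ab by auto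
        next
          case False then show False using gen[of b a] cr ab by (auto simp: insert_commute)
        qed
      qed
      moreover have "card (bd E ?Y) \<ge> l" using P1 YV Yne by blast
      ultimately show False using l1 by simp
    qed
  qed
  show ?thesis using tough_lemma[OF g r l1 nb P1 P2] by blast
qed

lemma bd_cases:
  assumes g: "sgraph V E" and e: "e \<in> bd E X"
  obtains x y where "e = {x,y}" "x \<in> X" "y \<in> V" "y \<notin> X" "e \<in> E" "x \<in> V" "x \<noteq> y"
proof -
  have eE: "e \<in> E" using e bd_sub by auto
  obtain x y where xy: "e = {x,y}" "x \<noteq> y" "x \<in> V" "y \<in> V" using sgraph_edge[OF g eE] by metis
  have cr: "(x \<in> X) \<noteq> (y \<in> X)" using e xy bd_pair[of x y E X] by auto
  show ?thesis
  proof (cases "x \<in> X")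
    case True then show ?thesis using that[of x y] cr xy eE by auto
  next
    case False then show ?thesis using that[of y x] cr xy eE by (auto simp: insert_commute)
  qed
qed

lemma bd_intro: "e = {x,y} \<Longrightarrow> x \<in> X \<Longrightarrow> y \<notin> X \<Longrightarrow> e \<in> E \<Longrightarrow> e \<in> bd E X"
  using bd_pair[of x y E X] by auto

lemma auto_bd:
  assumes g: "sgraph V E" and bij: "bij_betw \<phi> V V"
    and ad: "\<forall>x\<in>V. \<forall>y\<in>V. {x,y} \<in> E \<longleftrightarrow> {\<phi> x, \<phi> y} \<in> E" and X: "X \<subseteq> V"
  shows "card (bd E (\<phi>`X)) = card (bd E X)"
proof -
  have inj: "inj_on \<phi> V" and surj: "\<phi>`V = V" using bij unfolding bij_betw_def by auto
  have eq: "bd E (\<phi>`X) = image \<phi> ` bd E X"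
  proof
    show "bd E (\<phi>`X) \<subseteq> image \<phi> ` bd E X"
    proof
      fix e' assume "e' \<in> bd E (\<phi>`X)"
      then obtain p q where pq: "e' = {p,q}" "p \<in> \<phi>`X" "q \<in> V" "q \<notin> \<phi>`X" "e' \<in> E" "p \<in> V" "p \<noteq> q"
        by (rule bd_cases[OF g])
      obtain x where x: "x \<in> X" "p = \<phi> x" using pq by auto
      obtain y where y: "y \<in> V" "q = \<phi> y" using pq surj by (metis imageE)
      have "y \<notin> X" using y pq by auto
      have "{x,y} \<in> E" using ad x y X pq by auto
      then have "{x,y} \<in> bd E X" using x \<open>y \<notin> X\<close> by (intro bd_intro[of _ x y]) auto
      moreover have "e' = \<phi> ` {x,y}" using pq x y by auto
      ultimately show "e' \<in> image \<phi> ` bd E X" by blast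
    qed
    show "image \<phi> ` bd E X \<subseteq> bd E (\<phi>`X)"
    proof
      fix e' assume "e' \<in> image \<phi> ` bd E X"
      then obtain e where e: "e \<in> bd E X" "e' = \<phi>`e" by auto
      from e(1) obtain x y where xy: "e = {x,y}" "x \<in> X" "y \<in> V" "y \<notin> X" "e \<in> E" "x \<in> V" "x \<noteq> y"
        by (rule bd_cases[OF g])
      have "\<phi> y \<notin> \<phi>`X"
      proof
        assume "\<phi> y \<in> \<phi>`X"
        then obtain z where "z \<in> X" "\<phi> y = \<phi> z" by auto
        then have "y = z" using inj X xy unfolding inj_on_def by auto
        then show False using xy \<open>z \<in> X\<close> by auto
      qed
      moreover have "{\<phi> x, \<phi> y} \<in> E" using ad xy X by auto
      ultimately show "e' \<in> bd E (\<phi>`X)" using e xy by (intro bd_intro[of _ "\<phi> x" "\<phi> y"]) auto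
    qed
  qed
  have "inj_on (image \<phi>) (bd E X)"
  proof -
    have "bd E X \<subseteq> Pow V" using g bd_sub[of E X] unfolding sgraph_def by blast
    then show ?thesis using inj_on_image_Pow[OF inj] inj_on_subset by blast
  qed
  then show ?thesis unfolding eq by (rule card_image)
qed

lemma star_bd:
  assumes g: "sgraph V E" and r: "regular V E d" and X: "X \<subseteq> V" "p \<in> X" "q \<in> X" "p \<noteq> q"
    and no: "\<forall>z\<in>X. z \<noteq> p \<and> z \<noteq> q \<longrightarrow> {p,z} \<notin> E \<and> {q,z} \<notin> E"
  shows "card (bd E X) \<ge> 2*d - 2"
proof -
  have "(incident_edges E p \<union> incident_edges E q) - {{p,q}} \<subseteq> bd E X"
  proof
    fix e assume e: "e \<in> (incident_edges E p \<union> incident_edges E q) - {{p,q}}"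
    then have eE: "e \<in> E" unfolding incident_edges_def by auto
    obtain x y where xy: "e = {x,y}" "x \<noteq> y" using sgraph_edge[OF g eE] by metis
    show "e \<in> bd E X"
    proof (cases "p \<in> e")
      case True
      then obtain z where z: "e = {p,z}" "z \<noteq> p" using xy by (auto simp: insert_commute)
      have "z \<noteq> q" using z e by auto
      then have "z \<notin> X" using no z eE by auto
      then show ?thesis using z X eE by (intro bd_intro[of _ p z]) auto
    next
      case False
      then have "q \<in> e" using e unfolding incident_edges_def by auto
      then obtain z where z: "e = {q,z}" "z \<noteq> q" using xy by (auto simp: insert_commute)
      have "z \<noteq> p" using z False by auto
      then have "z \<notin> X" using no z eE by auto
      then show ?thesis using z X eE by (intro bd_intro[of _ q z]) auto
    qed
  qed
  moreover have "finite (bd E X)" using sgraph_finite_E[OF g] bd_sub finite_subset by metis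
  ultimately have "card ((incident_edges E p \<union> incident_edges E q) - {{p,q}}) \<le> card (bd E X)"
    by (rule card_mono[rotated])
  moreover have "card ((incident_edges E p \<union> incident_edges E q) - {{p,q}}) \<ge> 2*d - 2"
    by (rule two_stars[OF g r]) (use X in auto)
  ultimately show ?thesis by linarith
qed


lemma atom:
  assumes g: "sgraph V E" and r: "regular V E d" and d3: "d \<ge> 3"
    and conn: "\<forall>X. X \<subseteq> V \<and> X \<noteq> {} \<and> X \<noteq> V \<longrightarrow> bd E X \<noteq> {}"
    and tr: "\<forall>u v a b. {u,v} \<in> E \<and> u \<noteq> v \<and> {a,b} \<in> E \<and> a \<noteq> b \<longrightarrow>
      (\<exists>\<phi>. bij_betw \<phi> V V \<and> (\<forall>x\<in>V. \<forall>y\<in>V. {x,y} \<in> E \<longleftrightarrow> {\<phi> x, \<phi> y} \<in> E) \<and> \<phi> u = a \<and> \<phi> v = b)"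
  shows "\<forall>X. X \<subseteq> V \<and> card X \<ge> 2 \<and> card (V - X) \<ge> 2 \<longrightarrow> card (bd E X) > d"
proof (rule ccontr)
  define nt where "nt X \<longleftrightarrow> X \<subseteq> V \<and> card X \<ge> 2 \<and> card (V - X) \<ge> 2" for X
  assume "\<not> ?thesis"
  then obtain X0 where X0: "nt X0" "card (bd E X0) \<le> d" unfolding nt_def by auto
  have finV: "finite V" using g unfolding sgraph_def by auto
  obtain X1 where X1: "nt X1" "\<forall>Y. nt Y \<longrightarrow> card (bd E X1) \<le> card (bd E Y)"
    using ex_has_least_nat[of nt X0 "\<lambda>X. card (bd E X)"] X0 by blast
  define \<mu> where "\<mu> = card (bd E X1)"
  have mud: "\<mu> \<le> d" using X1 X0 unfolding \<mu>_def by force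
  obtain X where X: "nt X \<and> card (bd E X) = \<mu>" and Xmin: "\<forall>Y. nt Y \<and> card (bd E Y) = \<mu> \<longrightarrow> card X \<le> card Y"
    using ex_has_least_nat[of "\<lambda>X. nt X \<and> card (bd E X) = \<mu>" X1 card] X1 unfolding \<mu>_def by blast
  have XV: "X \<subseteq> V" and X2: "card X \<ge> 2" and cX2: "card (V - X) \<ge> 2" and bX: "card (bd E X) = \<mu>"
    using X unfolding nt_def by auto
  have ntmu: "card (bd E Z) \<ge> \<mu>" if "nt Z" for Z using X1 that unfolding \<mu>_def by auto
  have F1: "card (bd E Z) \<ge> \<mu>" if Z: "Z \<subseteq> V" "Z \<noteq> {}" "Z \<noteq> V" for Z
  proof -
    have finZ: "finite Z" using Z finV finite_subset by auto
    have finZ': "finite (V - Z)" using finV by auto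
    show ?thesis
    proof (cases "card Z = 1")
      case True
      then obtain z where "Z = {z}" by (rule card_1_singletonE)
      then show ?thesis using bd_single[OF g, of z] r Z mud unfolding regular_def by auto
    next
      case False
      note F = this
      show ?thesis
      proof (cases "card (V - Z) = 1")
        case True
        then obtain z where z: "V - Z = {z}" by (rule card_1_singletonE)
        then have "bd E Z = incident_edges E z" using bd_single[OF g, of z] bd_compl[OF g, of Z] by simp
        then show ?thesis using r z mud unfolding regular_def by auto
      next
        case False
        have "card Z \<noteq> 0" using finZ Z by auto
        moreover have "card (V - Z) \<noteq> 0" using finZ' Z by auto
        ultimately have "nt Z" using F False Z unfolding nt_def by auto
        then show ?thesis by (rule ntmu)
      qed
    qed
  qed
  have finX: "finite X" using XV finV finite_subset by auto
  have Xle: "card X \<le> card (V - X)"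
  proof -
    have "nt (V - X)" using XV X2 cX2 unfolding nt_def by (auto simp: Diff_Diff_Int Int_absorb1)
    moreover have "card (bd E (V - X)) = \<mu>" using bX bd_compl[OF g] by simp
    ultimately show ?thesis using Xmin by auto
  qed
  have inner: "\<exists>a b. {a,b} \<in> E \<and> a \<noteq> b \<and> a \<in> X \<and> b \<in> X"
  proof (rule ccontr)
    assume noi: "\<not> ?thesis"
    obtain p q where pq: "p \<in> X" "q \<in> X" "p \<noteq> q" using X2 finX
      by (metis card_le_Suc0_iff_eq not_less_eq_eq numeral_2_eq_2)
    have "\<forall>z\<in>X. z \<noteq> p \<and> z \<noteq> q \<longrightarrow> {p,z} \<notin> E \<and> {q,z} \<notin> E"
    proof (intro ballI impI)
      fix z assume "z \<in> X" "z \<noteq> p \<and> z \<noteq> q"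
      then show "{p,z} \<notin> E \<and> {q,z} \<notin> E" using noi pq by metis
    qed
    then have "card (bd E X) \<ge> 2*d - 2" using star_bd[OF g r XV pq] by blast
    then show False using bX mud d3 by linarith
  qed
  then obtain a0 b0 where ab0: "{a0,b0} \<in> E" "a0 \<noteq> b0" "a0 \<in> X" "b0 \<in> X" by blast
  have X3: "card X \<ge> 3"
  proof (rule ccontr)
    assume "\<not> card X \<ge> 3"
    then have "card X = 2" using X2 by simp
    then have Xab: "X = {a0, b0}" using ab0 finX
      by (metis card_2_iff doubleton_eq_iff insertE singletonD)
    have "card (bd E X) \<ge> 2*d - 2" using star_bd[OF g r XV ab0(3,4,2)] Xab by auto
    then show False using bX mud d3 by linarith
  qed
  have "X \<noteq> {}" "X \<noteq> V" using X2 cX2 by auto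
  then have "bd E X \<noteq> {}" using conn XV by auto
  then obtain e where "e \<in> bd E X" by auto
  then obtain u v where uv: "e = {u,v}" "u \<in> X" "v \<in> V" "v \<notin> X" "e \<in> E" "u \<in> V" "u \<noteq> v"
    by (rule bd_cases[OF g])
  obtain \<phi> where bij: "bij_betw \<phi> V V" and ad: "\<forall>x\<in>V. \<forall>y\<in>V. {x,y} \<in> E \<longleftrightarrow> {\<phi> x, \<phi> y} \<in> E"
      and ph: "\<phi> u = a0" "\<phi> v = b0"
    using tr uv ab0 by blast
  have inj: "inj_on \<phi> V" and surj: "\<phi>`V = V" using bij unfolding bij_betw_def by auto
  define Y where "Y = \<phi>`X"
  have YV: "Y \<subseteq> V" using XV surj unfolding Y_def by auto
  have cY: "card Y = card X" unfolding Y_def using inj XV by (meson card_image inj_on_subset)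
  have finY: "finite Y" using YV finV finite_subset by auto
  have cV: "card V = card X + card (V - X)" using card_Diff_subset[OF finX XV] card_mono[OF finV XV] by linarith
  have cVY: "card V = card Y + card (V - Y)" using card_Diff_subset[OF finY YV] card_mono[OF finV YV] by linarith
  have bY: "card (bd E Y) = \<mu>" unfolding Y_def using auto_bd[OF g bij ad XV] bX by simp
  have aY: "a0 \<in> Y" using ph uv unfolding Y_def by auto
  have bnY: "b0 \<notin> Y"
  proof
    assume "b0 \<in> Y"
    then obtain z where "z \<in> X" "\<phi> v = \<phi> z" using ph unfolding Y_def by auto
    then have "v = z" using inj XV uv unfolding inj_on_def by auto
    then show False using uv \<open>z \<in> X\<close> by auto
  qed
  have YX: "Y - X \<noteq> {}"
  proof
    assume "Y - X = {}"
    then have "Y \<subseteq> X" by auto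
    then have "Y = X" using card_subset_eq[OF finX] cY by auto
    then show False using bnY ab0 by auto
  qed
  have cInt: "card (X \<inter> Y) \<ge> 1" using aY ab0 finX
    by (metis One_nat_def Suc_leI card_gt_0_iff empty_iff finite_Int IntI)
  have cUI: "card X + card Y = card (X \<union> Y) + card (X \<inter> Y)" using card_Un_Int[OF finX finY] .
  have UV: "X \<union> Y \<noteq> V" using cUI cInt cY Xle cV by auto
  have sm: "card (bd E (X \<inter> Y)) + card (bd E (X \<union> Y)) \<le> \<mu> + \<mu>" using bd_submod[OF g, of X Y] bX bY by simp
  have "card (bd E (X \<union> Y)) \<ge> \<mu>" using F1[of "X \<union> Y"] UV XV YV \<open>X \<noteq> {}\<close> by auto
  with sm have sI: "card (bd E (X \<inter> Y)) \<le> \<mu>" by linarith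
  have pm: "card (bd E (X - Y)) + card (bd E (Y - X)) \<le> \<mu> + \<mu>" using bd_posimod[OF g XV YV] bX bY by simp
  have "Y - X \<noteq> V" using \<open>X \<noteq> {}\<close> XV by auto
  then have "card (bd E (Y - X)) \<ge> \<mu>" using F1[of "Y - X"] YX YV by auto
  with pm have sD: "card (bd E (X - Y)) \<le> \<mu>" by linarith
  have cD: "card (X \<inter> Y) + card (X - Y) = card X" using finX by (metis card_Int_Diff inf_commute Int_commute)
  have big: "card (V - Z) \<ge> 2" if "Z \<subseteq> X" for Z
  proof -
    have "card (V - X) \<le> card (V - Z)" using that finV by (intro card_mono) auto
    then show ?thesis using cX2 by linarith
  qed
  show False
  proof (cases "card (X \<inter> Y) \<ge> 2")
    case True
    then have "nt (X \<inter> Y)" using big[of "X \<inter> Y"] XV unfolding nt_def by auto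
    then have "card (bd E (X \<inter> Y)) = \<mu>" using ntmu sI by (simp add: le_antisym)
    then have "card X \<le> card (X \<inter> Y)" using Xmin \<open>nt (X \<inter> Y)\<close> by auto
    moreover have "card (X \<inter> Y) < card X" using finX bnY ab0 by (intro psubset_card_mono) auto
    ultimately show False by linarith
  next
    case False
    then have "card (X - Y) \<ge> 2" using cD cInt X3 by linarith
    then have "nt (X - Y)" using big[of "X - Y"] XV unfolding nt_def by auto
    then have "card (bd E (X - Y)) = \<mu>" using ntmu sD by (simp add: le_antisym)
    then have "card X \<le> card (X - Y)" using Xmin \<open>nt (X - Y)\<close> by auto
    moreover have "card (X - Y) < card X" using finX aY ab0 by (intro psubset_card_mono) auto
    ultimately show False by linarith
  qed
qed

lemma kv_mem: "A \<in> kneser_verts n k \<longleftrightarrow> A \<subseteq> {1..n} \<and> card A = k"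
  unfolding kneser_verts_def by simp

lemma kv_finite: "finite (kneser_verts n k)"
proof -
  have "kneser_verts n k \<subseteq> Pow {1..n}" unfolding kneser_verts_def by auto
  then show ?thesis by (rule finite_subset) simp
qed

lemma kv_fin_el: "A \<in> kneser_verts n k \<Longrightarrow> finite A"
  unfolding kneser_verts_def using finite_subset by auto

lemma ke_iff:
  assumes "x \<in> kneser_verts n k" "y \<in> kneser_verts n k"
  shows "{x,y} \<in> kneser_edges n k \<longleftrightarrow> x \<noteq> y \<and> x \<inter> y = {}"
proof
  assume "{x,y} \<in> kneser_edges n k"
  then obtain A B where AB: "{x,y} = {A,B}" "A \<noteq> B" "A \<inter> B = {}" unfolding kneser_edges_def by auto
  then have "(x = A \<and> y = B) \<or> (x = B \<and> y = A)" by (simp add: doubleton_eq_iff)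
  then show "x \<noteq> y \<and> x \<inter> y = {}" using AB by auto
next
  assume "x \<noteq> y \<and> x \<inter> y = {}"
  then show "{x,y} \<in> kneser_edges n k" using assms unfolding kneser_edges_def by blast
qed

lemma kn_sgraph: "sgraph (kneser_verts n k) (kneser_edges n k)"
  unfolding sgraph_def
proof (intro conjI ballI)
  show "finite (kneser_verts n k)" by (rule kv_finite)
  fix e assume "e \<in> kneser_edges n k"
  then obtain A B where "e = {A,B}" "A \<in> kneser_verts n k" "B \<in> kneser_verts n k" "A \<noteq> B"
    unfolding kneser_edges_def by auto
  then show "card e = 2" "e \<subseteq> kneser_verts n k" by auto
qed

lemma kn_star:
  assumes A: "A \<in> kneser_verts n k" and k1: "k \<ge> 1"
  shows "card (incident_edges (kneser_edges n k) A) = (n - k) choose k"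
proof -
  let ?N = "{B. B \<subseteq> {1..n} - A \<and> card B = k}"
  have Ane: "A \<noteq> {}" using A k1 unfolding kneser_verts_def by auto
  have eq: "incident_edges (kneser_edges n k) A = (\<lambda>B. {A,B}) ` ?N"
  proof
    show "incident_edges (kneser_edges n k) A \<subseteq> (\<lambda>B. {A,B}) ` ?N"
    proof
      fix e assume "e \<in> incident_edges (kneser_edges n k) A"
      then have e: "e \<in> kneser_edges n k" "A \<in> e" unfolding incident_edges_def by auto
      then obtain x y where xy: "e = {x,y}" "x \<in> kneser_verts n k" "y \<in> kneser_verts n k"
        using sgraph_edge[OF kn_sgraph] by metis
      obtain B where B: "e = {A,B}" "B \<in> kneser_verts n k" using xy e(2) by (auto simp: insert_commute)
      then have "A \<noteq> B \<and> A \<inter> B = {}" using ke_iff[OF A B(2)] e by auto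
      then have "B \<in> ?N" using B(2) unfolding kneser_verts_def by auto
      then show "e \<in> (\<lambda>B. {A,B}) ` ?N" using B by auto
    qed
    show "(\<lambda>B. {A,B}) ` ?N \<subseteq> incident_edges (kneser_edges n k) A"
    proof
      fix e assume "e \<in> (\<lambda>B. {A,B}) ` ?N"
      then obtain B where B: "e = {A,B}" "B \<subseteq> {1..n} - A" "card B = k" by auto
      have BV: "B \<in> kneser_verts n k" using B unfolding kneser_verts_def by auto
      have "A \<inter> B = {}" using B by auto
      moreover have "A \<noteq> B" using \<open>A \<inter> B = {}\<close> Ane by auto
      ultimately show "e \<in> incident_edges (kneser_edges n k) A" using ke_iff[OF A BV] B
        unfolding incident_edges_def by auto
    qed
  qed
  have inj: "inj_on (\<lambda>B. {A,B}) ?N"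
    by (rule inj_onI) (auto simp: doubleton_eq_iff)
  have cA: "card ({1..n} - A) = n - k"
  proof -
    have "A \<subseteq> {1..n}" "card A = k" using A unfolding kneser_verts_def by auto
    moreover have "finite A" using \<open>A \<subseteq> {1..n}\<close> finite_subset by blast
    ultimately show ?thesis using card_Diff_subset[of A "{1..n}"] by simp
  qed
  have "card ?N = (n - k) choose k" using n_subsets[of "{1..n} - A" k] cA by simp
  then show ?thesis unfolding eq using card_image[OF inj] by simp
qed

lemma kn_regular: "k \<ge> 1 \<Longrightarrow> regular (kneser_verts n k) (kneser_edges n k) ((n - k) choose k)"
  unfolding regular_def using kn_star by blast

lemma kn_d3:
  assumes "k \<ge> 2" "2*k + 1 \<le> n"
  shows "(n - k) choose k \<ge> 3"
proof -
  define m where "m = n - k"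
  have mk: "m \<ge> k + 1" using assms unfolding m_def by auto
  have m3: "m \<ge> 3" using mk assms by auto
  show ?thesis
  proof (cases "2 * k \<le> m")
    case True
    have "m choose 1 \<le> m choose k" using binomial_mono[of 1 k m] True assms by auto
    then show ?thesis using m3 unfolding m_def by simp
  next
    case False
    have "m choose k = m choose (m - k)" using mk by (intro binomial_symmetric) auto
    moreover have "m choose 1 \<le> m choose (m - k)" using binomial_mono[of 1 "m - k" m] False mk by auto
    ultimately show ?thesis using m3 unfolding m_def by simp
  qed
qed

lemma crossing_bool:
  assumes "(a,b) \<in> R\<^sup>*" "f a \<noteq> f b"
  shows "\<exists>x y. (x,y) \<in> R \<and> f x \<noteq> f y"
  using assms
proof (induction rule: rtrancl_induct)
  case base then show ?case by simp
next
  case (step y z)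
  show ?case
  proof (cases "f y = f a")
    case True
    then show ?thesis using step by (intro exI[of _ y] exI[of _ z]) auto
  next
    case False
    then have "f a \<noteq> f y" by simp
    then show ?thesis using step.IH by blast
  qed
qed

definition kcn :: "nat \<Rightarrow> nat \<Rightarrow> (nat set \<times> nat set) set" where
  "kcn n k = {(A,B). \<exists>Z. {A,Z} \<in> kneser_edges n k \<and> {B,Z} \<in> kneser_edges n k}"

lemma kn_cn_conn:
  assumes nk: "2*k + 1 \<le> n" and k1: "k \<ge> 1"
  shows "A \<in> kneser_verts n k \<Longrightarrow> B \<in> kneser_verts n k \<Longrightarrow> card (A - B) = m \<Longrightarrow> (A,B) \<in> (kcn n k)\<^sup>*"
proof (induction m arbitrary: A)
  case 0
  have fA: "finite A" "finite B" using 0 kv_fin_el by auto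
  have "A \<subseteq> B" using 0 fA by auto
  then have "A = B" using card_subset_eq[OF fA(2)] 0 unfolding kneser_verts_def by auto
  then show ?case by simp
next
  case (Suc m)
  have fA: "finite A" "finite B" using Suc.prems kv_fin_el by auto
  have AV: "A \<subseteq> {1..n}" "card A = k" and BV: "B \<subseteq> {1..n}" "card B = k"
    using Suc.prems unfolding kneser_verts_def by auto
  have "A - B \<noteq> {}" using Suc.prems(3) by (cases "A - B = {}") auto
  then obtain x where x: "x \<in> A" "x \<notin> B" by blast
  have "card (B - A) = card (A - B)"
    using card_Diff_subset_Int[of B A] card_Diff_subset_Int[of A B] fA AV BV by (simp add: Int_commute)
  then have "B - A \<noteq> {}" using Suc.prems(3) by (cases "B - A = {}") auto
  then obtain y where y: "y \<in> B" "y \<notin> A" by blast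
  define A' where "A' = insert y (A - {x})"
  have cA': "card A' = k" unfolding A'_def using fA x y AV k1 by (simp add: card_Diff_singleton)
  have A'V: "A' \<in> kneser_verts n k" using cA' AV BV x y unfolding A'_def kneser_verts_def by auto
  have "A' - B = (A - B) - {x}" unfolding A'_def using y by auto
  then have "card (A' - B) = m" using Suc.prems(3) x fA by (simp add: card_Diff_singleton)
  then have IH: "(A', B) \<in> (kcn n k)\<^sup>*" using Suc.IH A'V Suc.prems(2) by blast
  have "card (insert y A) = k + 1" using AV fA y by simp
  moreover have "insert y A \<subseteq> {1..n}" using AV BV y by auto
  moreover have "finite (insert y A)" using fA by simp
  ultimately have "card ({1..n} - insert y A) = n - (k + 1)"
    using card_Diff_subset[of "insert y A" "{1..n}"] by simp
  then have "k \<le> card ({1..n} - insert y A)" using nk by simp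
  then obtain Z where Z: "Z \<subseteq> {1..n} - insert y A" "card Z = k" by (rule obtain_subset_with_card_n)
  have ZV: "Z \<in> kneser_verts n k" using Z unfolding kneser_verts_def by auto
  have Ane: "A \<noteq> {}" "A' \<noteq> {}" using AV cA' k1 by auto
  have "A \<inter> Z = {}" "A' \<inter> Z = {}" using Z unfolding A'_def by auto
  then have "{A,Z} \<in> kneser_edges n k" "{A',Z} \<in> kneser_edges n k"
    using ke_iff[OF Suc.prems(1) ZV] ke_iff[OF A'V ZV] Ane by auto
  then have "(A, A') \<in> kcn n k" unfolding kcn_def by auto
  then show ?case using IH by (rule converse_rtrancl_into_rtrancl)
qed

lemma kn_conn:
  assumes nk: "2*k + 1 \<le> n" and k1: "k \<ge> 1"
  shows "\<forall>X. X \<subseteq> kneser_verts n k \<and> X \<noteq> {} \<and> X \<noteq> kneser_verts n k \<longrightarrow> bd (kneser_edges n k) X \<noteq> {}"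
proof (intro allI impI)
  fix X assume X: "X \<subseteq> kneser_verts n k \<and> X \<noteq> {} \<and> X \<noteq> kneser_verts n k"
  then obtain A B where AB: "A \<in> X" "B \<in> kneser_verts n k" "B \<notin> X" by auto
  then have "(A,B) \<in> (kcn n k)\<^sup>*" using kn_cn_conn[OF nk k1 _ _ refl] X by blast
  then obtain x y where xy: "(x,y) \<in> kcn n k" "(x \<in> X) \<noteq> (y \<in> X)"
    using crossing_bool[of A B _ "\<lambda>z. z \<in> X"] AB by blast
  then obtain Z where Z: "{x,Z} \<in> kneser_edges n k" "{y,Z} \<in> kneser_edges n k" unfolding kcn_def by auto
  show "bd (kneser_edges n k) X \<noteq> {}"
  proof (cases "(Z \<in> X) = (x \<in> X)")
    case True
    have "{y,Z} \<in> bd (kneser_edges n k) X"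
    proof (cases "y \<in> X")
      case True
      then show ?thesis using xy Z True \<open>(Z \<in> X) = (x \<in> X)\<close> bd_intro[of "{y,Z}" y Z X] by auto
    next
      case False
      then show ?thesis using xy Z False \<open>(Z \<in> X) = (x \<in> X)\<close> bd_intro[of "{y,Z}" Z y X] by (auto simp: insert_commute)
    qed
    then show ?thesis by auto
  next
    case False
    have "{x,Z} \<in> bd (kneser_edges n k) X"
    proof (cases "x \<in> X")
      case True
      then show ?thesis using xy Z True False bd_intro[of "{x,Z}" x Z X] by auto
    next
      case False
      then show ?thesis using xy Z \<open>(Z \<in> X) \<noteq> (x \<in> X)\<close> False bd_intro[of "{x,Z}" Z x X] by (auto simp: insert_commute)
    qed
    then show ?thesis by auto
  qed
qed

lemma kn_nonbip:
  assumes nk: "2*k + 1 \<le> n" and k1: "k \<ge> 1"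
  shows "\<not> bipartite (kneser_verts n k) (kneser_edges n k)"
proof
  assume "bipartite (kneser_verts n k) (kneser_edges n k)"
  then obtain P Q where PQ0: "P \<union> Q = kneser_verts n k \<and> P \<inter> Q = {} \<and>
      (\<forall>e\<in>kneser_edges n k. e \<inter> P \<noteq> {} \<and> e \<inter> Q \<noteq> {})"
    unfolding bipartite_def by (elim exE) (rule that)
  then have PQ: "P \<inter> Q = {}" "\<forall>e\<in>kneser_edges n k. e \<inter> P \<noteq> {} \<and> e \<inter> Q \<noteq> {}" by (rule conjunct1[OF conjunct2], rule conjunct2[OF conjunct2])
  have sides: "(x \<in> P) \<noteq> (y \<in> P)" if xyE: "{x,y} \<in> kneser_edges n k" for x y
  proof
    have h: "{x,y} \<inter> P \<noteq> {} \<and> {x,y} \<inter> Q \<noteq> {}" using bspec[OF PQ(2) xyE] .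
    assume eq: "(x \<in> P) = (y \<in> P)"
    show False
    proof (cases "x \<in> P")
      case True
      then have "x \<notin> Q" "y \<notin> Q" using eq PQ(1) by auto
      then show False using h by auto
    next
      case False
      then have "x \<notin> P" "y \<notin> P" using eq by auto
      then show False using h by auto
    qed
  qed
  define A0 where "A0 = {1..k}"
  define B0 where "B0 = {k+1..2*k}"
  have A0V: "A0 \<in> kneser_verts n k" unfolding kv_mem
  proof
    show "A0 \<subseteq> {1..n}" unfolding A0_def using nk by simp
    show "card A0 = k" unfolding A0_def by simp
  qed
  have B0V: "B0 \<in> kneser_verts n k" unfolding kv_mem
  proof
    show "B0 \<subseteq> {1..n}" unfolding B0_def using nk by simp
    show "card B0 = k" unfolding B0_def by simp
  qed
  have "A0 \<inter> B0 = {}" unfolding A0_def B0_def by auto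
  moreover have "1 \<in> A0" "1 \<notin> B0" unfolding A0_def B0_def using k1 by auto
  ultimately have "A0 \<inter> B0 = {}" "A0 \<noteq> B0" by auto
  then have "{A0,B0} \<in> kneser_edges n k" using ke_iff[OF A0V B0V] by auto
  then have "(A0 \<in> P) \<noteq> (B0 \<in> P)" by (rule sides)
  moreover have "(A0,B0) \<in> (kcn n k)\<^sup>*" using kn_cn_conn[OF nk k1 A0V B0V refl] .
  ultimately obtain x y where xy: "(x,y) \<in> kcn n k" "(x \<in> P) \<noteq> (y \<in> P)"
    using crossing_bool[of A0 B0 _ "\<lambda>z. z \<in> P"] by blast
  then obtain Z where Z: "{x,Z} \<in> kneser_edges n k" "{y,Z} \<in> kneser_edges n k" unfolding kcn_def by auto
  show False using sides[OF Z(1)] sides[OF Z(2)] xy(2) by blast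
qed

lemma perm_exists:
  assumes u: "u \<subseteq> N" "card u = k" and v: "v \<subseteq> N" "card v = k" and a: "a \<subseteq> N" "card a = k"
    and b: "b \<subseteq> N" "card b = k" and fN: "finite N" and uv: "u \<inter> v = {}" and ab: "a \<inter> b = {}"
  shows "\<exists>\<pi>. bij_betw \<pi> N N \<and> \<pi>`u = a \<and> \<pi>`v = b"
proof -
  have fin: "finite u" "finite v" "finite a" "finite b" using u v a b fN finite_subset by auto
  define R1 where "R1 = N - (u \<union> v)"
  define R2 where "R2 = N - (a \<union> b)"
  have "card (u \<union> v) = 2*k" using card_Un_disjoint[OF fin(1,2) uv] u v by simp
  moreover have "card (a \<union> b) = 2*k" using card_Un_disjoint[OF fin(3,4) ab] a b by simp
  ultimately have "card R1 = card R2" unfolding R1_def R2_def using u v a b fin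
    by (simp add: card_Diff_subset)
  then obtain f3 where f3: "bij_betw f3 R1 R2" using finite_same_card_bij fN unfolding R1_def R2_def by blast
  obtain f1 where f1: "bij_betw f1 u a" using finite_same_card_bij fin u a by metis
  obtain f2 where f2: "bij_betw f2 v b" using finite_same_card_bij fin v b by metis
  define \<pi> where "\<pi> x = (if x \<in> u then f1 x else if x \<in> v then f2 x else f3 x)" for x
  have b1: "bij_betw \<pi> u a" using f1 by (rule bij_betw_cong[THEN iffD1, rotated]) (simp add: \<pi>_def)
  have b2: "bij_betw \<pi> v b" using f2 uv by (intro bij_betw_cong[THEN iffD1, rotated, OF f2]) (auto simp: \<pi>_def)
  have b3: "bij_betw \<pi> R1 R2" by (intro bij_betw_cong[THEN iffD1, rotated, OF f3]) (auto simp: \<pi>_def R1_def)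
  have b12: "bij_betw \<pi> (u \<union> v) (a \<union> b)" by (rule bij_betw_combine[OF b1 b2 ab])
  have "bij_betw \<pi> ((u \<union> v) \<union> R1) ((a \<union> b) \<union> R2)" by (rule bij_betw_combine[OF b12 b3]) (auto simp: R2_def)
  moreover have "(u \<union> v) \<union> R1 = N" "(a \<union> b) \<union> R2 = N" using u v a b unfolding R1_def R2_def by auto
  ultimately have "bij_betw \<pi> N N" by simp
  moreover have "\<pi>`u = a" using b1 by (simp add: bij_betw_def)
  moreover have "\<pi>`v = b" using b2 by (simp add: bij_betw_def)
  ultimately show ?thesis by blast
qed

lemma img_auto:
  assumes pi: "bij_betw \<pi> {1..n} {1..n}"
  shows "bij_betw (image \<pi>) (kneser_verts n k) (kneser_verts n k)"
    and "\<forall>x\<in>kneser_verts n k. \<forall>y\<in>kneser_verts n k.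
           {x,y} \<in> kneser_edges n k \<longleftrightarrow> {\<pi>`x, \<pi>`y} \<in> kneser_edges n k"
proof -
  let ?V = "kneser_verts n k"
  have inj: "inj_on \<pi> {1..n}" and surj: "\<pi>`{1..n} = {1..n}" using pi unfolding bij_betw_def by auto
  have inV: "\<pi>`x \<in> ?V" if "x \<in> ?V" for x
  proof -
    have "x \<subseteq> {1..n}" "card x = k" using that unfolding kneser_verts_def by auto
    moreover have "card (\<pi>`x) = card x" using inj \<open>x \<subseteq> {1..n}\<close> by (meson card_image inj_on_subset)
    moreover have "\<pi>`x \<subseteq> {1..n}" using surj \<open>x \<subseteq> {1..n}\<close> by auto
    ultimately show ?thesis unfolding kneser_verts_def by auto
  qed
  have sub: "x \<subseteq> {1..n}" if "x \<in> ?V" for x using that unfolding kneser_verts_def by auto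
  have injV: "inj_on (image \<pi>) ?V"
    by (rule inj_onI) (use inj_on_image_eq_iff[OF inj] sub in blast)
  have "image \<pi> ` ?V \<subseteq> ?V" using inV by auto
  moreover have "card (image \<pi> ` ?V) = card ?V" using card_image[OF injV] .
  ultimately have "image \<pi> ` ?V = ?V" using card_subset_eq[OF kv_finite] by blast
  then show "bij_betw (image \<pi>) ?V ?V" using injV unfolding bij_betw_def by auto
  show "\<forall>x\<in>?V. \<forall>y\<in>?V. {x,y} \<in> kneser_edges n k \<longleftrightarrow> {\<pi>`x, \<pi>`y} \<in> kneser_edges n k"
  proof (intro ballI)
    fix x y assume xy: "x \<in> ?V" "y \<in> ?V"
    have "\<pi>`x \<inter> \<pi>`y = \<pi>`(x \<inter> y)" using inj_on_image_Int[OF inj sub[OF xy(1)] sub[OF xy(2)]] by simp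
    moreover have "\<pi>`x = \<pi>`y \<longleftrightarrow> x = y" using inj_on_image_eq_iff[OF inj sub[OF xy(1)] sub[OF xy(2)]] .
    ultimately show "{x,y} \<in> kneser_edges n k \<longleftrightarrow> {\<pi>`x, \<pi>`y} \<in> kneser_edges n k"
      using ke_iff[OF xy] ke_iff[OF inV[OF xy(1)] inV[OF xy(2)]] by auto
  qed
qed

lemma kn_trans:
  "\<forall>u v a b. {u,v} \<in> kneser_edges n k \<and> u \<noteq> v \<and> {a,b} \<in> kneser_edges n k \<and> a \<noteq> b \<longrightarrow>
      (\<exists>\<phi>. bij_betw \<phi> (kneser_verts n k) (kneser_verts n k) \<and>
        (\<forall>x\<in>kneser_verts n k. \<forall>y\<in>kneser_verts n k. {x,y} \<in> kneser_edges n k \<longleftrightarrow> {\<phi> x, \<phi> y} \<in> kneser_edges n k)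
        \<and> \<phi> u = a \<and> \<phi> v = b)"
proof (intro allI impI)
  fix u v a b
  assume h: "{u,v} \<in> kneser_edges n k \<and> u \<noteq> v \<and> {a,b} \<in> kneser_edges n k \<and> a \<noteq> b"
  have uv: "u \<in> kneser_verts n k" "v \<in> kneser_verts n k" "a \<in> kneser_verts n k" "b \<in> kneser_verts n k"
    using h kn_sgraph[of n k] unfolding sgraph_def by auto
  have d: "u \<inter> v = {}" "a \<inter> b = {}" using h ke_iff[OF uv(1,2)] ke_iff[OF uv(3,4)] by auto
  obtain \<pi> where pi: "bij_betw \<pi> {1..n} {1..n}" "\<pi>`u = a" "\<pi>`v = b"
    using perm_exists[of u "{1..n}" k v a b] uv d unfolding kneser_verts_def by auto
  show "\<exists>\<phi>. bij_betw \<phi> (kneser_verts n k) (kneser_verts n k) \<and>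
        (\<forall>x\<in>kneser_verts n k. \<forall>y\<in>kneser_verts n k. {x,y} \<in> kneser_edges n k \<longleftrightarrow> {\<phi> x, \<phi> y} \<in> kneser_edges n k)
        \<and> \<phi> u = a \<and> \<phi> v = b"
    using img_auto[OF pi(1), of k] pi(2,3) by blast
qed

lemma P1_of_P2:
  assumes g: "sgraph V E" and r: "regular V E d"
    and P2: "\<forall>X. X \<subseteq> V \<and> card X \<ge> 2 \<and> card (V - X) \<ge> 2 \<longrightarrow> card (bd E X) > d"
  shows "\<forall>X. X \<subseteq> V \<and> X \<noteq> {} \<and> X \<noteq> V \<longrightarrow> card (bd E X) \<ge> d"
proof (intro allI impI)
  fix Z assume Z: "Z \<subseteq> V \<and> Z \<noteq> {} \<and> Z \<noteq> V"
  have finV: "finite V" using g unfolding sgraph_def by auto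
  have finZ: "finite Z" using Z finV finite_subset by auto
  have finZ': "finite (V - Z)" using finV by auto
  show "card (bd E Z) \<ge> d"
  proof (cases "card Z = 1")
    case True
    then obtain z where "Z = {z}" by (rule card_1_singletonE)
    then show ?thesis using bd_single[OF g, of z] r Z unfolding regular_def by auto
  next
    case False
    note F = this
    show ?thesis
    proof (cases "card (V - Z) = 1")
      case True
      then obtain z where z: "V - Z = {z}" by (rule card_1_singletonE)
      then have "bd E Z = incident_edges E z" using bd_single[OF g, of z] bd_compl[OF g, of Z] by simp
      then show ?thesis using r z unfolding regular_def by auto
    next
      case False
      have "card Z \<noteq> 0" using finZ Z by auto
      moreover have "card (V - Z) \<noteq> 0" using finZ' Z by auto
      ultimately have "card (bd E Z) > d" using P2 F False Z by auto
      then show ?thesis by simp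
    qed
  qed
qed

lemma kneser_cut:
  assumes nk: "2*k+1 \<le> n" and vc: "vertex_cut (kneser_verts n k) (kneser_edges n k) S"
  shows "card S > num_components (kneser_verts n k - S) (kneser_edges n k)"
proof (cases "k \<ge> 2")
  case True
  have g: "sgraph (kneser_verts n k) (kneser_edges n k)" by (rule kn_sgraph)
  have r: "regular (kneser_verts n k) (kneser_edges n k) ((n - k) choose k)" using True by (intro kn_regular) auto
  have d3: "(n - k) choose k \<ge> 3" using kn_d3 True nk by blast
  then have d1: "(n - k) choose k \<ge> 1" by simp
  have nb: "\<not> bipartite (kneser_verts n k) (kneser_edges n k)" using kn_nonbip nk True by auto
  have P2: "\<forall>X. X \<subseteq> kneser_verts n k \<and> card X \<ge> 2 \<and> card (kneser_verts n k - X) \<ge> 2 \<longrightarrow>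
      card (bd (kneser_edges n k) X) > (n - k) choose k"
    using atom[OF g r d3 kn_conn[OF nk] kn_trans] True by auto
  note P1 = P1_of_P2[OF g r P2]
  show ?thesis by (rule tough_lemma[OF g r d1 nb P1 P2 vc])
next
  case False
  let ?V = "kneser_verts n k" and ?E = "kneser_edges n k"
  have "\<forall>x\<in>?V - S. \<forall>y\<in>?V - S. x \<noteq> y \<longrightarrow> {x,y} \<in> ?E"
  proof (intro ballI impI)
    fix x y assume xy: "x \<in> ?V - S" "y \<in> ?V - S" "x \<noteq> y"
    then have xV: "x \<in> ?V" "y \<in> ?V" by auto
    have fx: "finite x" "finite y" using xV kv_fin_el by auto
    have cx: "card x = k" "card y = k" using xV unfolding kneser_verts_def by auto
    have "k = 0 \<or> k = 1" using False by auto
    then have "x \<inter> y = {}"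
    proof
      assume "k = 0"
      then have "x = {}" "y = {}" using cx fx by auto
      then show ?thesis using xy by simp
    next
      assume "k = 1"
      then obtain p q where "x = {p}" "y = {q}" using cx by (metis card_1_singletonE)
      then show ?thesis using xy by auto
    qed
    then show "{x,y} \<in> ?E" using ke_iff[OF xV] xy by auto
  qed
  then have "num_components (?V - S) ?E \<le> 1" by (rule complete_comp)
  then show ?thesis using vc unfolding vertex_cut_def by auto
qed

lemma tough_gt1:
  assumes cut: "\<forall>S. vertex_cut V E S \<longrightarrow> card S > num_components (V - S) E" and fV: "finite V"
  shows "toughness V E > 1"
proof -
  define T where "T = {S. vertex_cut V E S}"
  define f where "f S = ereal (real (card S) / real (num_components (V - S) E))" for S
  have tT: "toughness V E = Inf (f ` T)" unfolding toughness_def T_def f_def by simp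
  show ?thesis
  proof (cases "T = {}")
    case True
    then show ?thesis unfolding tT by (simp add: top_ereal_def)
  next
    case False
    have "T \<subseteq> Pow V" unfolding T_def vertex_cut_def by auto
    then have fT: "finite T" using fV finite_subset by blast
    have "Inf (f ` T) = Min (f ` T)" using fT False by (simp add: Min_Inf)
    moreover have "Min (f ` T) \<in> f ` T" using fT False by (intro Min_in) auto
    ultimately obtain S where S: "S \<in> T" "toughness V E = f S" using tT by auto
    have vc: "vertex_cut V E S" using S unfolding T_def by auto
    then have c2: "num_components (V - S) E \<ge> 2" unfolding vertex_cut_def by auto
    have lt: "card S > num_components (V - S) E" using cut vc by auto
    have "real (num_components (V - S) E) < real (card S)" using lt by simp
    moreover have "real (num_components (V - S) E) > 0" using c2 by simp
    ultimately have "real (card S) / real (num_components (V - S) E) > 1" by (simp add: less_divide_eq)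
    then show ?thesis using S unfolding f_def by simp
  qed
qed

lemma kneser_tough: "\<forall>n k::nat. 2 * k + 1 \<le> n \<longrightarrow> toughness (kneser_verts n k) (kneser_edges n k) > 1"
proof (intro allI impI)
  fix n k :: nat assume nk: "2 * k + 1 \<le> n"
  show "toughness (kneser_verts n k) (kneser_edges n k) > 1"
    by (rule tough_gt1) (use kneser_cut[OF nk] kv_finite in auto)
qed

theorem lemma2p13:
  fixes V :: "'a set" and E :: "'a set set" and l :: nat
  assumes "sgraph V E"
    and "regular V E l"
    and "\<not> bipartite V E"
    and "edge_connectivity V E = l"
    and "\<forall>F. edge_cut V E F \<and> card F = l \<longrightarrow> (\<exists>v\<in>V. F = incident_edges E v)"
  shows "(\<forall>S. vertex_cut V E S \<longrightarrow> card S > num_components (V - S) E)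
    \<and> (\<forall>n k::nat. 2 * k + 1 \<le> n \<longrightarrow> toughness (kneser_verts n k) (kneser_edges n k) > 1)"
  using part1[OF assms] kneser_tough by blast

end
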